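(* Let $p$ be a prime, $a\in\mathbb{Q}_p$, $a\ne0$, with $\sqrt{-a}\in\mathbb{Q}_p$, $A=|a|_p$, and $f(x)=\frac{ax}{x^2+a}$ on $\mathbb{Q}_p$. Let $0<r<\sqrt A$, $\rho(r)=r^3/A$, and $c\in\mathbb{Q}_p$ with $|c|_p=r$. Then: 1. $|f^{n+1}(c)-f^n(c)|_p=\rho(r)$ for every $n\ge1$. 2. $f(V_{\rho(r)}(c))=V_{\rho(r)}(c)$. 3. If for some $\theta>0$ the ball $V_\theta(c)\subset S_r(0)$ is invariant under $f$ (i.e. $f(V_\theta(c))\subseteq V_\theta(c)$), then $\theta\ge\rho(r)$.
   Context: $V_\theta(c)=\{x\in\mathbb{Q}_p:|x-c|_p\le\theta\}$, $S_r(0)=\{x\in\mathbb{Q}_p:|x|_p=r\}$; $f^n$ is the $n$-th iterate of $f$. *)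

theory Defs
  imports Complex_Main "HOL-Computational_Algebra.Primes"
begin

definition padic_val_rat :: "nat \<Rightarrow> rat \<Rightarrow> int" where
  "padic_val_rat p q =
     (let (n, d) = quotient_of q
      in int (multiplicity (int p) n) - int (multiplicity (int p) d))"

definition padic_abs_rat :: "nat \<Rightarrow> rat \<Rightarrow> real" where
  "padic_abs_rat p q = (if q = 0 then 0 else real p powi (- padic_val_rat p q))"

text \<open>The field of p-adic numbers, characterised up to isometric isomorphism:
  a field K (of characteristic 0, containing Q via of_rat) with a
  (non-archimedean) absolute value that restricts to the p-adic absolute value
  on Q, in which Q is dense, and which is complete.  This is exactly the
  completion of Q w.r.t. the p-adic absolute value, i.e. Q_p.\<close>

definition is_Qp :: "nat \<Rightarrow> ('a::field_char_0 \<Rightarrow> real) \<Rightarrow> bool" where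
  "is_Qp p absv \<longleftrightarrow>
     (\<forall>x. absv x \<ge> 0) \<and>
     (\<forall>x. absv x = 0 \<longleftrightarrow> x = 0) \<and>
     (\<forall>x y. absv (x * y) = absv x * absv y) \<and>
     (\<forall>x y. absv (x + y) \<le> max (absv x) (absv y)) \<and>
     (\<forall>q. absv (of_rat q) = padic_abs_rat p q) \<and>
     (\<forall>x. \<forall>\<epsilon>>0. \<exists>q. absv (x - of_rat q) < \<epsilon>) \<and>
     (\<forall>X::nat \<Rightarrow> 'a.
        (\<forall>\<epsilon>>0. \<exists>N. \<forall>m\<ge>N. \<forall>n\<ge>N. absv (X m - X n) < \<epsilon>) \<longrightarrow>
        (\<exists>L. \<forall>\<epsilon>>0. \<exists>N. \<forall>n\<ge>N. absv (X n - L) < \<epsilon>))"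

definition pball :: "('a \<Rightarrow> real) \<Rightarrow> real \<Rightarrow> 'a::ab_group_add \<Rightarrow> 'a set" where
  "pball absv \<theta> c = {x. absv (x - c) \<le> \<theta>}"

definition psphere0 :: "('a \<Rightarrow> real) \<Rightarrow> real \<Rightarrow> 'a set" where
  "psphere0 absv r = {x. absv x = r}"

end

theory Submission
  imports Defs
begin


locale ultra =
  fixes absv :: "'a::field_char_0 \<Rightarrow> real"
  assumes nn: "\<And>x. absv x \<ge> 0"
    and z: "\<And>x. absv x = 0 \<longleftrightarrow> x = 0"
    and mul: "\<And>x y. absv (x*y) = absv x * absv y"
    and ult: "\<And>x y. absv (x+y) \<le> max (absv x) (absv y)"
begin

lemma one: "absv 1 = 1"
proof -
  have "absv 1 * absv 1 = absv 1" using mul[of 1 1] by simp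
  moreover have "absv 1 \<noteq> 0" using z by simp
  ultimately show ?thesis by simp
qed

lemma minus: "absv (-x) = absv x"
proof -
  have "absv (-1) * absv (-1) = 1" using mul[of "-1" "-1"] one by simp
  hence "absv (-1) = 1" using nn[of "-1"]
    by (metis abs_of_nonneg abs_square_eq_1 power2_eq_square)
  thus ?thesis using mul[of "-1" x] by simp
qed

lemma comm: "absv (x - y) = absv (y - x)"
  using minus[of "x - y"] by simp

lemma pow: "absv (x ^ n) = absv x ^ n"
  by (induction n) (simp_all add: one mul)

lemma dv: "absv (x / y) = absv x / absv y"
proof (cases "y = 0")
  case True thus ?thesis using z[of 0] by simp
next
  case False
  have yn: "absv y \<noteq> 0" using z False by simp
  have "absv (inverse y) * absv y = 1" using mul[of "inverse y" y] False one by simp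
  hence "absv (inverse y) = 1 / absv y" using yn by (simp add: field_simps)
  thus ?thesis using mul[of x "inverse y"] by (simp add: divide_inverse)
qed

lemma strict: assumes "absv x < absv y" shows "absv (x + y) = absv y"
proof -
  have "absv (x+y) \<le> absv y" using ult[of x y] assms by simp
  moreover have "absv y \<le> max (absv (x+y)) (absv (-x))" using ult[of "x+y" "-x"] by simp
  ultimately show ?thesis using assms minus[of x] by (auto simp: max_def split: if_splits)
qed

lemma tri: "absv (x - z) \<le> max (absv (x - y)) (absv (y - z))"
  using ult[of "x - y" "y - z"] by simp

end

locale qset = ultra +
  fixes a :: "'a::field_char_0" and r :: real
  assumes a0: "a \<noteq> 0" and r0: "0 < r" and ra: "r^2 < absv a"
begin

definition F where "F x = a * x / (x^2 + a)"
definition H where "H x = x^3 / (x^2 + a)"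

lemma A0: "absv a > 0" using ra r0 by (meson less_trans zero_less_power)

lemma den: assumes "absv x = r" shows "absv (x^2 + a) = absv a"
  using strict[of "x^2" a] pow[of x 2] assms ra by simp

lemma den0: assumes "absv x = r" shows "x^2 + a \<noteq> 0"
  using den[OF assms] A0 z[of 0] z[of "x^2+a"] by auto

lemma FH: assumes "absv x = r" shows "F x = x - H x"
  using den0[OF assms] unfolding F_def H_def by (simp add: field_simps power2_eq_square power3_eq_cube)

lemma absH: assumes "absv x = r" shows "absv (H x) = r^3 / absv a"
  unfolding H_def using dv pow den[OF assms] assms by simp

lemma rho_lt: "r^3 / absv a < r"
proof -
  have e: "r^3 / absv a = r * (r^2 / absv a)" by (simp add: power3_eq_cube power2_eq_square)
  have "r^2 / absv a < 1" using ra A0 by simp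
  hence "r * (r^2 / absv a) < r * 1" using r0 by (rule mult_strict_left_mono)
  thus ?thesis using e by (metis mult_1_right)
qed

lemma absF: assumes "absv x = r" shows "absv (F x) = r"
proof -
  have "absv (- H x) < absv x" using absH[OF assms] minus rho_lt assms by simp
  hence "absv (- H x + x) = r" using strict[of "- H x" x] assms by simp
  thus ?thesis unfolding FH[OF assms] by simp
qed

lemma stepF: assumes "absv x = r" shows "absv (F x - x) = r^3 / absv a"
  using FH[OF assms] absH[OF assms] minus by simp

lemma inball: assumes "absv c = r" "absv (x - c) \<le> r^3 / absv a" shows "absv x = r"
proof -
  have "absv (x - c) < absv c" using assms rho_lt by simp
  hence "absv (x - c + c) = r" using strict[of "x - c" c] assms by simp
  thus ?thesis by simp
qed

lemma Hlip: assumes "absv x = r" "absv y = r"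
  shows "absv (H x - H y) \<le> (r^2 / absv a) * absv (x - y)"
proof -
  define N where "N = x^2*y^2 + a*(x^2 + x*y + y^2)"
  have eq: "H x - H y = (x - y) * N / ((x^2+a)*(y^2+a))"
    using den0[OF assms(1)] den0[OF assms(2)] unfolding H_def N_def
    by (simp add: field_simps power2_eq_square power3_eq_cube)
  have s: "absv (x^2 + x*y + y^2) \<le> r^2"
  proof -
    have "absv (x^2 + x*y + y^2) \<le> max (absv (x^2 + x*y)) (absv (y^2))" by (rule ult)
    moreover have "absv (x^2 + x*y) \<le> max (absv (x^2)) (absv (x*y))" by (rule ult)
    ultimately show ?thesis using assms pow mul by (simp add: power2_eq_square)
  qed
  have t1: "absv (x^2*y^2) \<le> absv a * r^2"
    using assms pow mul ra r0 by (simp add: power2_eq_square mult_right_mono less_imp_le)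
  have t2: "absv (a*(x^2 + x*y + y^2)) \<le> absv a * r^2"
    using mul s A0 by (simp add: mult_left_mono)
  have "absv N \<le> absv a * r^2" unfolding N_def using ult[of "x^2*y^2" "a*(x^2 + x*y + y^2)"] t1 t2 by simp
  have e2: "absv (H x - H y) = absv (x - y) * absv N / (absv a * absv a)"
    unfolding eq using dv mul den[OF assms(1)] den[OF assms(2)] by simp
  have "absv (x - y) * absv N \<le> absv (x - y) * (absv a * r^2)"
    using \<open>absv N \<le> absv a * r^2\<close> nn by (rule mult_left_mono)
  hence "absv (x - y) * absv N / (absv a * absv a) \<le> absv (x - y) * (absv a * r^2) / (absv a * absv a)"
    by (rule divide_right_mono) simp
  hence "absv (H x - H y) \<le> absv (x - y) * (absv a * r^2) / (absv a * absv a)"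
    unfolding e2 .
  also have "\<dots> = (r^2 / absv a) * absv (x - y)" using A0 by (simp add: field_simps power2_eq_square)
  finally show ?thesis .
qed

lemma surjF:
  assumes compl: "\<forall>X::nat \<Rightarrow> 'a.
        (\<forall>\<epsilon>>0. \<exists>N. \<forall>m\<ge>N. \<forall>n\<ge>N. absv (X m - X n) < \<epsilon>) \<longrightarrow>
        (\<exists>L. \<forall>\<epsilon>>0. \<exists>N. \<forall>n\<ge>N. absv (X n - L) < \<epsilon>)"
    and c: "absv c = r" and y: "absv (y - c) \<le> r^3 / absv a"
  shows "\<exists>x. absv (x - c) \<le> r^3 / absv a \<and> F x = y"
proof -
  define \<rho> where "\<rho> = r^3 / absv a"
  define k where "k = r^2 / absv a"
  have rp: "\<rho> > 0" unfolding \<rho>_def using r0 A0 by simp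
  have k0: "k > 0" unfolding k_def using r0 A0 by simp
  have k1: "k < 1" unfolding k_def using ra A0 by simp
  define T where "T x = y + H x" for x
  define X where "X n = (T ^^ n) y" for n
  have XS: "X (Suc n) = y + H (X n)" for n unfolding X_def T_def by simp
  have X0: "X 0 = y" unfolding X_def by simp
  have inB: "absv (X n - c) \<le> \<rho>" for n
  proof (induction n)
    case 0 show ?case unfolding X0 \<rho>_def by (rule y)
  next
    case (Suc n)
    have "absv (X n - c) \<le> r^3 / absv a" using Suc.IH unfolding \<rho>_def .
    hence "absv (X n) = r" by (rule inball[OF c])
    hence h: "absv (H (X n)) = \<rho>" unfolding \<rho>_def by (rule absH)
    have eq: "X (Suc n) - c = (y - c) + H (X n)" unfolding XS by simp
    have "absv (X (Suc n) - c) \<le> max (absv (y - c)) (absv (H (X n)))" unfolding eq by (rule ult)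
    moreover have "absv (y - c) \<le> \<rho>" unfolding \<rho>_def by (rule y)
    ultimately show ?case using h by linarith
  qed
  have Xr: "absv (X n) = r" for n
  proof -
    have "absv (X n - c) \<le> r^3 / absv a" using inB[of n] unfolding \<rho>_def .
    thus ?thesis by (rule inball[OF c])
  qed
  have yr: "absv y = r" using y by (rule inball[OF c])
  have stp: "absv (X (Suc n) - X n) \<le> k^n * \<rho>" for n
  proof (induction n)
    case 0
    have eq: "X (Suc 0) - X 0 = H y" unfolding XS X0 by simp
    show ?case unfolding eq using absH[OF yr] unfolding \<rho>_def by simp
  next
    case (Suc n)
    have eq: "X (Suc (Suc n)) - X (Suc n) = H (X (Suc n)) - H (X n)"
      using XS[of "Suc n"] XS[of n] by simp
    have "absv (X (Suc (Suc n)) - X (Suc n)) \<le> k * absv (X (Suc n) - X n)"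
      unfolding eq k_def by (rule Hlip[OF Xr Xr])
    also have "\<dots> \<le> k * (k^n * \<rho>)" using Suc.IH k0 by (intro mult_left_mono) auto
    finally show ?case by simp
  qed
  have far: "n \<le> m \<Longrightarrow> absv (X m - X n) \<le> k^n * \<rho>" for m n
  proof (induction m rule: dec_induct)
    case base
    have "absv (X n - X n) = 0" using z[of 0] by simp
    moreover have "0 \<le> k^n * \<rho>" using k0 rp by simp
    ultimately show ?case by linarith
  next
    case (step m)
    have "k^m \<le> k^n" using step(1) k0 k1 by (intro power_decreasing) auto
    hence a1: "k^m * \<rho> \<le> k^n * \<rho>" using rp by (intro mult_right_mono) auto
    have a2: "absv (X (Suc m) - X n) \<le> max (absv (X (Suc m) - X m)) (absv (X m - X n))" by (rule tri)
    show ?case using a1 a2 step(3) stp[of m] by linarith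
  qed
  have cauchy: "\<forall>\<epsilon>>0. \<exists>N. \<forall>m\<ge>N. \<forall>n\<ge>N. absv (X m - X n) < \<epsilon>"
  proof (intro allI impI)
    fix \<epsilon> :: real assume e: "\<epsilon> > 0"
    have "0 < \<epsilon> / \<rho>" using e rp by simp
    then obtain N where N: "k^N < \<epsilon> / \<rho>" using real_arch_pow_inv[of "\<epsilon>/\<rho>" k] k1 by blast
    hence N': "k^N * \<rho> < \<epsilon>" using rp by (simp add: pos_less_divide_eq)
    have mono: "k^j * \<rho> \<le> k^N * \<rho>" if "N \<le> j" for j
    proof -
      have "k^j \<le> k^N" using that k0 k1 by (intro power_decreasing) auto
      thus ?thesis using rp by (intro mult_right_mono) auto
    qed
    have "absv (X m - X n) < \<epsilon>" if "m \<ge> N" "n \<ge> N" for m n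
    proof (cases "n \<le> m")
      case True
      show ?thesis using far[OF True] N' mono[OF that(2)] by linarith
    next
      case False
      hence "m \<le> n" by simp
      show ?thesis using far[OF \<open>m \<le> n\<close>] N' mono[OF that(1)] comm[of "X m" "X n"] by linarith
    qed
    thus "\<exists>N. \<forall>m\<ge>N. \<forall>n\<ge>N. absv (X m - X n) < \<epsilon>" by blast
  qed
  then obtain L where L: "\<forall>\<epsilon>>0. \<exists>N. \<forall>n\<ge>N. absv (X n - L) < \<epsilon>" using compl by blast
  have LB: "absv (L - c) \<le> \<rho>"
  proof (rule ccontr)
    assume "\<not> ?thesis"
    hence d: "absv (L - c) > \<rho>" by simp
    hence "absv (L - c) > 0" using rp by linarith
    then obtain N where "\<forall>n\<ge>N. absv (X n - L) < absv (L - c)" using L by blast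
    hence "absv (X N - L) < absv (L - c)" by blast
    moreover have "absv (L - c) \<le> max (absv (L - X N)) (absv (X N - c))" by (rule tri)
    ultimately show False using inB[of N] d comm[of L "X N"] by linarith
  qed
  have Lr: "absv L = r"
  proof -
    have "absv (L - c) \<le> r^3 / absv a" using LB unfolding \<rho>_def .
    thus ?thesis by (rule inball[OF c])
  qed
  have fix0: "absv (T L - L) < \<epsilon>" if e: "\<epsilon> > 0" for \<epsilon>
  proof -
    obtain N where N: "\<forall>n\<ge>N. absv (X n - L) < \<epsilon>" using L e by blast
    have eq: "T L - X (Suc N) = H L - H (X N)" unfolding XS T_def by simp
    have "absv (T L - X (Suc N)) \<le> k * absv (L - X N)" unfolding eq k_def by (rule Hlip[OF Lr Xr])
    also have "\<dots> \<le> absv (L - X N)" using k0 k1 nn[of "L - X N"] by (intro mult_left_le_one_le) auto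
    also have "\<dots> < \<epsilon>" using N comm[of L "X N"] by auto
    finally have "absv (T L - X (Suc N)) < \<epsilon>" .
    moreover have "absv (X (Suc N) - L) < \<epsilon>" using N by simp
    moreover have "absv (T L - L) \<le> max (absv (T L - X (Suc N))) (absv (X (Suc N) - L))" by (rule tri)
    ultimately show ?thesis by linarith
  qed
  have "absv (T L - L) = 0"
  proof (rule ccontr)
    assume "absv (T L - L) \<noteq> 0"
    hence "absv (T L - L) > 0" using nn[of "T L - L"] by linarith
    thus False using fix0[of "absv (T L - L)"] by linarith
  qed
  hence "T L - L = 0" using z by blast
  hence "y + H L = L" unfolding T_def by simp
  hence "F L = y" unfolding FH[OF Lr] by (simp add: algebra_simps)
  thus ?thesis using LB unfolding \<rho>_def by blast
qed

end


theorem theorem3p4: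
  fixes p :: nat and absv :: "'a::field_char_0 \<Rightarrow> real"
    and a c :: 'a and r :: real
  assumes "prime p"
    and "is_Qp p absv"
    and "a \<noteq> 0"
    and "\<exists>s. s * s = - a"
    and "0 < r" and "r < sqrt (absv a)"
    and "absv c = r"
  defines "f \<equiv> (\<lambda>x. a * x / (x ^ 2 + a))"
    and "\<rho> \<equiv> r ^ 3 / absv a"
  shows "(\<forall>n\<ge>1. absv ((f ^^ (n + 1)) c - (f ^^ n) c) = \<rho>)
       \<and> f ` pball absv \<rho> c = pball absv \<rho> c
       \<and> (\<forall>\<theta>>0. pball absv \<theta> c \<subseteq> psphere0 absv r
                 \<and> f ` pball absv \<theta> c \<subseteq> pball absv \<theta> c \<longrightarrow> \<theta> \<ge> \<rho>)"
proof -
  note Q = assms(2)[unfolded is_Qp_def]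
  have nn: "\<And>x. absv x \<ge> 0" and zz: "\<And>x. absv x = 0 \<longleftrightarrow> x = 0"
    and mm: "\<And>x y. absv (x*y) = absv x * absv y"
    and uu: "\<And>x y. absv (x+y) \<le> max (absv x) (absv y)" using Q by blast+
  have compl: "\<forall>X::nat \<Rightarrow> 'a.
        (\<forall>\<epsilon>>0. \<exists>N. \<forall>m\<ge>N. \<forall>n\<ge>N. absv (X m - X n) < \<epsilon>) \<longrightarrow>
        (\<exists>L. \<forall>\<epsilon>>0. \<exists>N. \<forall>n\<ge>N. absv (X n - L) < \<epsilon>)" using Q by blast
  have A0: "absv a \<ge> 0" by (rule nn)
  have "r^2 < (sqrt (absv a))^2" using assms(5,6) by (intro power_strict_mono) auto
  hence ra: "r^2 < absv a" using A0 by simp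
  interpret qset absv a r
    by unfold_locales (use nn zz mm uu assms(3,5) ra in auto)
  have fF: "f = F" unfolding f_def F_def by (rule ext) simp
  have c: "absv c = r" by (rule assms(7))
  have it: "absv ((F ^^ n) c) = r" for n
    by (induction n) (simp_all add: c absF)
  have P1: "\<forall>n\<ge>1. absv ((f ^^ (n + 1)) c - (f ^^ n) c) = \<rho>"
  proof (intro allI impI)
    fix n :: nat
    have "(F ^^ (n + 1)) c = F ((F ^^ n) c)" by simp
    thus "absv ((f ^^ (n + 1)) c - (f ^^ n) c) = \<rho>"
      unfolding fF \<rho>_def using stepF[OF it[of n]] by simp
  qed
  have sub: "F ` pball absv \<rho> c \<subseteq> pball absv \<rho> c"
  proof
    fix w assume "w \<in> F ` pball absv \<rho> c"
    then obtain x where x: "absv (x - c) \<le> \<rho>" and w: "w = F x" unfolding pball_def by auto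
    have xr: "absv x = r" using x unfolding \<rho>_def by (rule inball[OF c])
    have "absv (F x - c) \<le> max (absv (F x - x)) (absv (x - c))" by (rule tri)
    thus "w \<in> pball absv \<rho> c" unfolding pball_def w using stepF[OF xr] x \<rho>_def by simp
  qed
  have sup: "pball absv \<rho> c \<subseteq> F ` pball absv \<rho> c"
  proof
    fix y assume "y \<in> pball absv \<rho> c"
    hence "absv (y - c) \<le> r^3 / absv a" unfolding pball_def \<rho>_def by simp
    then obtain x where "absv (x - c) \<le> r^3 / absv a" "F x = y" using surjF[OF compl c] by blast
    thus "y \<in> F ` pball absv \<rho> c" unfolding pball_def \<rho>_def by force
  qed
  have P3: "\<forall>\<theta>>0. pball absv \<theta> c \<subseteq> psphere0 absv r
                 \<and> f ` pball absv \<theta> c \<subseteq> pball absv \<theta> c \<longrightarrow> \<theta> \<ge> \<rho>"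
  proof (intro allI impI)
    fix \<theta> :: real assume t: "\<theta> > 0" and H: "pball absv \<theta> c \<subseteq> psphere0 absv r
                 \<and> f ` pball absv \<theta> c \<subseteq> pball absv \<theta> c"
    have "c \<in> pball absv \<theta> c" unfolding pball_def using t zz[of 0] by simp
    hence "F c \<in> pball absv \<theta> c" using H fF by blast
    thus "\<theta> \<ge> \<rho>" unfolding pball_def \<rho>_def using stepF[OF c] by simp
  qed
  show ?thesis using P1 sub sup P3 fF by blast
qed

end
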